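(* Let $V$ be an $\mathbb{R}^d$-valued random vector whose law $P_V$ has a Lebesgue density $f_V$, and assume that its characteristic function satisfies $\varphi_V(\omega)\neq 0$ for Lebesgue-a.e. $\omega\in\mathbb{R}^d$. Then for every $\lambda\in C_0(\mathbb{R}^d;\mathbb{C})$ there exists a unique continuous linear functional $\mathcal{T}_{\lambda,V}\in\mathcal{A}_V'(\mathbb{R}^d)$ such that \[ \mathcal{T}_{\lambda,V}\bigl[\mathcal{K}_V[\mu]\bigr]=\int_{\mathbb{R}^d}\lambda(x)\,d\mu(x)\qquad\text{for all }\mu\in\mathcal{M}(\mathbb{R}^d). \] In particular, if $X$ is an $\mathbb{R}^d$-valued random vector independent of $V$ with law $P_X$ and $Y=X+V$, then the density of $Y$ is $f_Y=\mathcal{K}_V[P_X]$ and \[ \mathcal{T}_{\lambda,V}[f_Y]=\int_{\mathbb{R}^d}\lambda(x)\,dP_X(x). \]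
   Context: $\varphi_V(\omega)=\mathbb{E}[e^{i\omega^\top V}]$. $\mathcal{M}(\mathbb{R}^d)$ is the Banach space of finite signed (complex allowed) Radon measures on $\mathbb{R}^d$ with the total variation norm $\|\mu\|_{TV}=\sup\{|\int h\,d\mu|: h\in C_0(\mathbb{R}^d),\|h\|_\infty\le 1\}$. The convolution operator is $\mathcal{K}_V[\mu](y)=(f_V*\mu)(y)=\int f_V(y-x)\,d\mu(x)$, mapping $\mathcal{M}(\mathbb{R}^d)$ into $L^1(\mathbb{R}^d;\mathbb{C})$. The space of $V$-admissible mixtures is $\mathcal{A}_V(\mathbb{R}^d)=\{f_V*\mu:\mu\in\mathcal{M}(\mathbb{R}^d)\}$; under the nonvanishing assumption on $\varphi_V$ the representing measure $\mu$ of each $f\in\mathcal{A}_V$ is unique and $\mathcal{A}_V$ is normed by $\|f\|_{\mathcal{A}_V}=\|\mu\|_{TV}$ where $f=f_V*\mu$. $\mathcal{A}_V'(\mathbb{R}^d)$ denotes the space of continuous linear functionals on $(\mathcal{A}_V(\mathbb{R}^d),\|\cdot\|_{\mathcal{A}_V})$. $C_0$ denotes continuous functions vanishing at infinity. *)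

theory Defs
  imports "HOL-Probability.Probability"
begin

text \<open>A finite complex Borel (Radon) measure on R^d is represented as a pair (nu, g):
  a finite positive Borel measure nu together with a nu-integrable Borel density g,
  i.e. the complex measure g d nu. Every finite complex measure has this form
  (take nu = |mu| and g = d mu / d|mu|).\<close>

type_synonym 'n cmeas = "(real^'n) measure \<times> (real^'n \<Rightarrow> complex)"

definition cmeas :: "'n::finite cmeas set" where
  "cmeas = {(\<nu>, g). finite_measure \<nu> \<and> sets \<nu> = sets borel \<and>
                     g \<in> borel_measurable borel \<and> integrable \<nu> g}"

definition cint :: "'n::finite cmeas \<Rightarrow> (real^'n \<Rightarrow> complex) \<Rightarrow> complex" where
  "cint \<mu> h = (\<integral>x. h x * snd \<mu> x \<partial>(fst \<mu>))"

definition C0 :: "(real^'n::finite \<Rightarrow> complex) set" where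
  "C0 = {h. continuous_on UNIV h \<and> (h \<longlongrightarrow> 0) at_infinity}"

definition tv_norm :: "'n::finite cmeas \<Rightarrow> real" where
  "tv_norm \<mu> = (SUP h \<in> {h \<in> C0. \<forall>x. norm (h x) \<le> 1}. norm (cint \<mu> h))"

definition conv_op :: "(real^'n::finite \<Rightarrow> real) \<Rightarrow> 'n cmeas \<Rightarrow> (real^'n \<Rightarrow> complex)" where
  "conv_op fV \<mu> = (\<lambda>y. cint \<mu> (\<lambda>x. complex_of_real (fV (y - x))))"

definition admissible :: "(real^'n::finite \<Rightarrow> real) \<Rightarrow> (real^'n \<Rightarrow> complex) set" where
  "admissible fV = conv_op fV ` cmeas"

definition adm_norm :: "(real^'n::finite \<Rightarrow> real) \<Rightarrow> (real^'n \<Rightarrow> complex) \<Rightarrow> real" where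
  "adm_norm fV f = tv_norm (SOME \<mu>. \<mu> \<in> cmeas \<and> conv_op fV \<mu> = f)"

definition adm_dual :: "(real^'n::finite \<Rightarrow> real) \<Rightarrow> ((real^'n \<Rightarrow> complex) \<Rightarrow> complex) set" where
  "adm_dual fV = {T.
     (\<forall>f \<in> admissible fV. \<forall>g \<in> admissible fV. T (\<lambda>x. f x + g x) = T f + T g) \<and>
     (\<forall>c. \<forall>f \<in> admissible fV. T (\<lambda>x. c * f x) = c * T f) \<and>
     (\<exists>C. \<forall>f \<in> admissible fV. norm (T f) \<le> C * adm_norm fV f)}"

definition char_fun :: "'s measure \<Rightarrow> ('s \<Rightarrow> real^'n::finite) \<Rightarrow> real^'n \<Rightarrow> complex" where
  "char_fun M V \<omega> = (\<integral>s. cis (\<omega> \<bullet> V s) \<partial>M)"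

end

theory Submission
  imports Defs
begin


definition bm :: "(real^'n::finite \<Rightarrow> complex) \<Rightarrow> bool" where
  "bm h \<longleftrightarrow> h \<in> borel_measurable borel \<and> (\<exists>B. \<forall>x. norm (h x) \<le> B)"

lemma cmeasE:
  assumes "\<mu> \<in> cmeas"
  obtains \<nu> g where "\<mu> = (\<nu>, g)" "finite_measure \<nu>" "sets \<nu> = sets borel"
    "g \<in> borel_measurable \<nu>" "g \<in> borel_measurable borel" "integrable \<nu> g"
proof -
  obtain \<nu> g where mu: "\<mu> = (\<nu>, g)" by force
  with assms have s: "sets \<nu> = sets borel" and "g \<in> borel_measurable borel" "finite_measure \<nu>" "integrable \<nu> g"
    by (auto simp: cmeas_def)
  moreover have "g \<in> borel_measurable \<nu>" using measurable_cong_sets[OF s refl] calculation by simp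
  ultimately show ?thesis using that mu by blast
qed

lemma bm_meas: "bm h \<Longrightarrow> sets \<nu> = sets borel \<Longrightarrow> h \<in> borel_measurable \<nu>"
  using measurable_cong_sets[of \<nu> borel borel borel] by (auto simp: bm_def)

lemma integrable_bm:
  assumes "integrable \<nu> g" "sets \<nu> = sets borel" "bm h"
  shows "integrable \<nu> (\<lambda>x. h x * g x)"
proof -
  obtain B where B: "\<And>x. norm (h x) \<le> B" using assms(3) by (auto simp: bm_def)
  have B0: "0 \<le> B" using B[of 0] norm_ge_zero order_trans by blast
  have gm: "g \<in> borel_measurable \<nu>" using assms(1) by auto
  have "integrable \<nu> (\<lambda>x. of_real B * g x)" using assms(1) by simp
  then show ?thesis
  proof (rule Bochner_Integration.integrable_bound)
    show "(\<lambda>x. h x * g x) \<in> borel_measurable \<nu>" using bm_meas[OF assms(3,2)] gm by measurable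
    show "AE x in \<nu>. norm (h x * g x) \<le> norm (complex_of_real B * g x)"
      using B B0 by (auto simp: norm_mult intro!: mult_right_mono)
  qed
qed

lemma integrable_bm_norm:
  fixes g :: "_ \<Rightarrow> complex"
  assumes "integrable \<nu> g" "sets \<nu> = sets borel" "bm h"
  shows "integrable \<nu> (\<lambda>x. norm (h x) * norm (g x))"
  using integrable_norm[OF integrable_bm[OF assms]] by (simp add: norm_mult)

lemma cint_integrable: "\<mu> \<in> cmeas \<Longrightarrow> bm h \<Longrightarrow> integrable (fst \<mu>) (\<lambda>x. h x * snd \<mu> x)"
  by (elim cmeasE) (auto intro: integrable_bm)

lemma bm_add: "bm h \<Longrightarrow> bm k \<Longrightarrow> bm (\<lambda>x. h x + k x)"
  unfolding bm_def
  apply (auto)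
  subgoal for B C by (rule exI[of _ "B + C"]) (metis add_mono norm_triangle_ineq order_trans)
  done

lemma bm_diff: "bm h \<Longrightarrow> bm k \<Longrightarrow> bm (\<lambda>x. h x - k x)"
  unfolding bm_def
  apply (auto)
  subgoal for B C by (rule exI[of _ "B + C"]) (metis add_mono norm_triangle_ineq4 order_trans)
  done

lemma bm_cmult: "bm h \<Longrightarrow> bm (\<lambda>x. c * h x)"
  unfolding bm_def
  apply (auto)
  subgoal for B by (rule exI[of _ "norm c * B"]) (simp add: norm_mult mult_left_mono)
  done

lemma cint_add: "\<mu> \<in> cmeas \<Longrightarrow> bm h \<Longrightarrow> bm k \<Longrightarrow> cint \<mu> (\<lambda>x. h x + k x) = cint \<mu> h + cint \<mu> k"
  unfolding cint_def using cint_integrable[of \<mu> h] cint_integrable[of \<mu> k]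
  by (simp add: distrib_right)

lemma cint_diff: "\<mu> \<in> cmeas \<Longrightarrow> bm h \<Longrightarrow> bm k \<Longrightarrow> cint \<mu> (\<lambda>x. h x - k x) = cint \<mu> h - cint \<mu> k"
  unfolding cint_def using cint_integrable[of \<mu> h] cint_integrable[of \<mu> k]
  by (simp add: left_diff_distrib)

lemma cint_cmult: "cint \<mu> (\<lambda>x. c * h x) = c * cint \<mu> h"
  unfolding cint_def by (simp add: mult.assoc)

lemma cint_norm_bound: "norm (cint \<mu> h) \<le> (\<integral>x. norm (h x) * norm (snd \<mu> x) \<partial>fst \<mu>)"
  unfolding cint_def using integral_norm_bound[of "fst \<mu>" "\<lambda>x. h x * snd \<mu> x"] by (simp add: norm_mult)



inductive_set trigs :: "(real^'n::finite \<Rightarrow> complex) set" where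
  trigs_chr: "(\<lambda>x. cis (w \<bullet> x)) \<in> trigs"
| trigs_add: "p \<in> trigs \<Longrightarrow> q \<in> trigs \<Longrightarrow> (\<lambda>x. p x + q x) \<in> trigs"
| trigs_smult: "p \<in> trigs \<Longrightarrow> (\<lambda>x. c * p x) \<in> trigs"

lemma trigs_bm: "p \<in> trigs \<Longrightarrow> bm p"
proof (induction rule: trigs.induct)
  case (trigs_chr w)
  show ?case unfolding bm_def
    by (auto intro!: borel_measurable_continuous_onI continuous_intros exI[of _ 1])
next
  case (trigs_add p q) show ?case using trigs_add.IH by (rule bm_add)
next
  case (trigs_smult p c) show ?case using trigs_smult.IH by (rule bm_cmult)
qed

lemma trigs_chr_mult: "q \<in> trigs \<Longrightarrow> (\<lambda>x. cis (w \<bullet> x) * q x) \<in> trigs"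
proof (induction rule: trigs.induct)
  case (trigs_chr w')
  have "(\<lambda>x. cis ((w + w') \<bullet> x)) \<in> trigs" by (rule trigs.trigs_chr)
  then show ?case by (simp add: cis_mult inner_add_left)
next
  case (trigs_add p q)
  then show ?case using trigs.trigs_add[OF trigs_add.IH] by (simp add: distrib_left)
next
  case (trigs_smult p c)
  then show ?case using trigs.trigs_smult[OF trigs_smult.IH, of c] by (simp add: ac_simps)
qed

lemma trigs_mult: "p \<in> trigs \<Longrightarrow> q \<in> trigs \<Longrightarrow> (\<lambda>x. p x * q x) \<in> trigs"
proof (induction rule: trigs.induct)
  case (trigs_chr w)
  then show ?case by (rule trigs_chr_mult)
next
  case (trigs_add p1 p2)
  then show ?case using trigs.trigs_add[of "\<lambda>x. p1 x * q x" "\<lambda>x. p2 x * q x"] by (simp add: distrib_right)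
next
  case (trigs_smult p c)
  then show ?case using trigs.trigs_smult[OF trigs_smult.IH, of c] by (simp add: ac_simps)
qed

lemma trigs_cint:
  assumes "\<mu> \<in> cmeas" "\<mu>' \<in> cmeas" "\<And>w. cint \<mu> (\<lambda>x. cis (w \<bullet> x)) = cint \<mu>' (\<lambda>x. cis (w \<bullet> x))"
  shows "p \<in> trigs \<Longrightarrow> cint \<mu> p = cint \<mu>' p"
proof (induction rule: trigs.induct)
  case (trigs_chr w)
  then show ?case using assms(3) by simp
next
  case (trigs_add p q)
  then show ?case using assms(1,2) by (simp add: cint_add trigs_bm)
next
  case (trigs_smult p c)
  then show ?case by (simp add: cint_cmult)
qed

definition torus :: "(complex^'n::finite) set" where
  "torus = {z. \<forall>i. norm (z$i) = 1}"

definition Emb :: "real \<Rightarrow> real^'n::finite \<Rightarrow> complex^'n" where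
  "Emb r x = (\<chi> i. cis (x$i / r))"

definition Ring :: "real \<Rightarrow> (complex^'n::finite \<Rightarrow> real) set" where
  "Ring r = {f. continuous_on torus f \<and> (\<exists>p\<in>trigs. \<forall>x. complex_of_real (f (Emb r x)) = p x)}"

lemma compact_torus: "compact (torus :: (complex^'n::finite) set)"
unfolding compact_eq_bounded_closed
proof
  show "closed (torus :: (complex^'n::finite) set)" unfolding torus_def
    by (intro closed_Collect_all closed_Collect_eq continuous_intros)
next
  show "bounded (torus :: (complex^'n::finite) set)" unfolding bounded_iff
  proof (intro exI ballI)
    fix z :: "complex^'n" assume "z \<in> torus"
    then show "norm z \<le> real CARD('n)"
      using L2_set_le_sum[of UNIV "\<lambda>i. norm (z$i)"] by (simp add: torus_def norm_vec_def)
  qed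
qed

lemma of_real_cos: "complex_of_real (cos t) = (1/2) * cis t + (1/2) * cis (- t)"
  by (simp add: complex_eq_iff cis.sel)

lemma of_real_sin: "complex_of_real (sin t) = (- \<i>/2) * cis t + (\<i>/2) * cis (- t)"
  by (simp add: complex_eq_iff cis.sel)

lemma Ring_fr: "r \<noteq> 0 \<Longrightarrow> function_ring_on (Ring r) (torus :: (complex^'n::finite) set)"
proof unfold_locales
  show "compact (torus :: (complex^'n::finite) set)" by (rule compact_torus)
next
  fix f :: "complex^'n \<Rightarrow> real" assume "f \<in> (Ring r :: (complex^'n \<Rightarrow> real) set)" then show "continuous_on torus f" by (simp add: Ring_def)
next
  fix f g :: "complex^'n \<Rightarrow> real" assume "f \<in> (Ring r :: (complex^'n \<Rightarrow> real) set)" "g \<in> Ring r"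
  then obtain p q where "p \<in> trigs" "q \<in> trigs" "\<forall>x. complex_of_real (f (Emb r x)) = p x" "\<forall>x. complex_of_real (g (Emb r x)) = q x"
    "continuous_on torus f" "continuous_on torus g"
    by (auto simp: Ring_def)
  note * = this
  then show "(\<lambda>x. f x + g x) \<in> Ring r" 
    unfolding Ring_def
    by (auto intro!: continuous_intros bexI[of _ "\<lambda>x. p x + q x"] trigs.trigs_add)
  from * show "(\<lambda>x. f x * g x) \<in> Ring r"
    unfolding Ring_def
    by (auto intro!: continuous_intros bexI[of _ "\<lambda>x. p x * q x"] trigs_mult)
next
  fix c :: real
  have "(\<lambda>x. complex_of_real c * cis (0 \<bullet> x)) \<in> (trigs :: (real^'n \<Rightarrow> complex) set)"
    by (rule trigs_smult trigs_chr)+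
  then show "(\<lambda>_. c) \<in> (Ring r :: (complex^'n \<Rightarrow> real) set)"
    unfolding Ring_def by (auto intro!: continuous_intros bexI[of _ "\<lambda>x. complex_of_real c * cis (0 \<bullet> x)"])
next
  fix z z' :: "complex^'n" assume "z \<in> torus" "z' \<in> torus" "z \<noteq> z'"
  then obtain i where i: "z$i \<noteq> z'$i" by (auto simp: vec_eq_iff)
  let ?w = "axis i (1/r) :: real^'n"
  have wx: "?w \<bullet> x = x$i / r" for x :: "real^'n" by (simp add: inner_axis')
  have wx': "(- ?w) \<bullet> x = - (x$i / r)" for x :: "real^'n" by (simp add: inner_axis')
  have tc: "(\<lambda>x. (1/2) * cis (?w \<bullet> x) + (1/2) * cis ((- ?w) \<bullet> x)) \<in> trigs"
    by (rule trigs_add trigs_smult trigs_chr)+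
  have ts: "(\<lambda>x. (- \<i>/2) * cis (?w \<bullet> x) + (\<i>/2) * cis ((- ?w) \<bullet> x)) \<in> trigs"
    by (rule trigs_add trigs_smult trigs_chr)+
  have re: "(\<lambda>z. Re (z$i)) \<in> (Ring r :: (complex^'n \<Rightarrow> real) set)"
    unfolding Ring_def
  proof (intro CollectI conjI bexI[OF _ tc] allI)
    show "continuous_on torus (\<lambda>z::complex^'n. Re (z$i))" by (intro continuous_intros)
    fix x :: "real^'n"
    show "complex_of_real (Re (Emb r x $ i)) = (1/2) * cis (?w \<bullet> x) + (1/2) * cis ((- ?w) \<bullet> x)"
      unfolding wx wx' Emb_def vec_lambda_beta cis.sel by (rule of_real_cos)
  qed
  have im: "(\<lambda>z. Im (z$i)) \<in> (Ring r :: (complex^'n \<Rightarrow> real) set)"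
    unfolding Ring_def
  proof (intro CollectI conjI bexI[OF _ ts] allI)
    show "continuous_on torus (\<lambda>z::complex^'n. Im (z$i))" by (intro continuous_intros)
    fix x :: "real^'n"
    show "complex_of_real (Im (Emb r x $ i)) = (- \<i>/2) * cis (?w \<bullet> x) + (\<i>/2) * cis ((- ?w) \<bullet> x)"
      unfolding wx wx' Emb_def vec_lambda_beta cis.sel by (rule of_real_sin)
  qed
  from i have "Re (z$i) \<noteq> Re (z'$i) \<or> Im (z$i) \<noteq> Im (z'$i)" using complex_eqI by blast
  then show "\<exists>f\<in>Ring r. f z \<noteq> f z'"
  proof
    assume "Re (z$i) \<noteq> Re (z'$i)"
    with re show ?thesis by (intro bexI[of _ "\<lambda>z. Re (z$i)"])
  next
    assume "Im (z$i) \<noteq> Im (z'$i)"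
    with im show ?thesis by (intro bexI[of _ "\<lambda>z. Im (z$i)"])
  qed
qed



lemma (in function_ring_on) approx:
  assumes "continuous_on S f" "e > 0"
  shows "\<exists>g\<in>R. \<forall>x\<in>S. \<bar>f x - g x\<bar> < e"
proof -
  obtain F where F: "F \<in> UNIV \<rightarrow> R" "uniform_limit S F f sequentially"
    using Stone_Weierstrass[OF assms(1)] by blast
  from uniform_limitD[OF F(2) assms(2)] obtain N where "\<forall>x\<in>S. dist (F N x) (f x) < e"
    by (auto simp: eventually_sequentially)
  then show ?thesis using F(1) by (intro bexI[of _ "F N"]) (auto simp: dist_real_def abs_minus_commute)
qed

definition psi :: "real \<Rightarrow> real^'n::finite \<Rightarrow> real^'n" where
  "psi r x = (\<chi> i. r * arcsin (sin (x$i / r)))"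

lemma Emb_torus: "Emb r x \<in> torus"
  by (simp add: Emb_def torus_def)

lemma continuous_psi: "continuous_on UNIV (psi r :: real^'n::finite \<Rightarrow> _)"
  unfolding psi_def divide_inverse by (intro continuous_intros) auto

lemma trig_approx:
  fixes h :: "real^'n::finite \<Rightarrow> complex"
  assumes hc: "continuous_on UNIV h" and r: "r > 0" and e: "e > 0"
  shows "\<exists>p\<in>trigs. \<forall>x. norm (h (psi r x) - p x) \<le> e"
proof -
  interpret fr: function_ring_on "Ring r" "torus :: (complex^'n) set" by (rule Ring_fr) (use r in simp)
  define G where "G z = h (\<chi> i. r * arcsin (Im (z$i)))" for z :: "complex^'n"
  have im1: "-1 \<le> Im (z$i) \<and> Im (z$i) \<le> 1" if "z \<in> torus" for z :: "complex^'n" and i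
    using that abs_Im_le_cmod[of "z$i"] by (auto simp: torus_def abs_le_iff)
  have c1: "continuous_on torus (\<lambda>z::complex^'n. (\<chi> i. r * arcsin (Im (z$i))) :: real^'n)"
    using im1 by (intro continuous_intros) auto
  have Gc: "continuous_on torus G"
    unfolding G_def by (rule continuous_on_compose2[OF hc c1]) auto
  have Rc: "continuous_on torus (\<lambda>z. Re (G z))" and Ic: "continuous_on torus (\<lambda>z. Im (G z))"
    using Gc by (auto intro!: continuous_intros)
  have e2: "e / 2 > 0" using e by simp
  obtain f1 where f1: "f1 \<in> Ring r" "\<forall>z\<in>torus. \<bar>Re (G z) - f1 z\<bar> < e / 2"
    using fr.approx[OF Rc e2] by blast
  obtain f2 where f2: "f2 \<in> Ring r" "\<forall>z\<in>torus. \<bar>Im (G z) - f2 z\<bar> < e / 2"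
    using fr.approx[OF Ic e2] by blast
  obtain p1 where p1: "p1 \<in> trigs" "\<forall>x. complex_of_real (f1 (Emb r x)) = p1 x" using f1(1) by (auto simp: Ring_def)
  obtain p2 where p2: "p2 \<in> trigs" "\<forall>x. complex_of_real (f2 (Emb r x)) = p2 x" using f2(1) by (auto simp: Ring_def)
  have pt: "(\<lambda>x. 1 * p1 x + \<i> * p2 x) \<in> trigs"
    using p1(1) p2(1) by (intro trigs.trigs_add trigs.trigs_smult)
  show ?thesis
  proof (intro bexI[OF _ pt] allI)
    fix x :: "real^'n"
    let ?z = "Emb r x"
    have Gz: "G ?z = h (psi r x)" by (simp add: G_def Emb_def psi_def)
    have "h (psi r x) - (1 * p1 x + \<i> * p2 x) = complex_of_real (Re (G ?z) - f1 ?z) + \<i> * complex_of_real (Im (G ?z) - f2 ?z)"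
      using p1(2) p2(2) Gz by (simp add: complex_eq_iff)
    also have "norm \<dots> \<le> \<bar>Re (G ?z) - f1 ?z\<bar> + \<bar>Im (G ?z) - f2 ?z\<bar>"
      by (rule order_trans[OF norm_triangle_ineq]) (simp add: norm_mult of_real_diff[symmetric] del: of_real_diff)
    also have "\<dots> \<le> e" using f1(2) f2(2) Emb_torus[of r x] by fastforce
    finally show "norm (h (psi r x) - (1 * p1 x + \<i> * p2 x)) \<le> e" .
  qed
qed



definition Bx :: "real \<Rightarrow> (real^'n::finite) set" where
  "Bx r = {x. \<forall>i. \<bar>x$i\<bar> \<le> r}"

lemma Bx_closed: "closed (Bx r)"
  unfolding Bx_def by (intro closed_Collect_all closed_Collect_le continuous_intros)

lemma Bx_borel[measurable]: "Bx r \<in> sets borel"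
  by (rule borel_closed[OF Bx_closed])

lemma tail:
  fixes g :: "real^'n::finite \<Rightarrow> complex"
  assumes gi: "integrable \<nu> g" and s: "sets \<nu> = sets borel" and e: "e > 0"
  shows "\<exists>N::nat. \<forall>n\<ge>N. (\<integral>x. indicator (- Bx (real n)) x * norm (g x) \<partial>\<nu>) < e"
proof -
  have gm: "g \<in> borel_measurable \<nu>" using gi by auto
  have Bm: "- Bx r \<in> sets \<nu>" for r using s by (simp add: sets.compl_sets[of "Bx r" borel] borel_open[OF open_Compl[OF Bx_closed]])
  have "(\<lambda>n. \<integral>x. indicator (- Bx (real n)) x * norm (g x) \<partial>\<nu>) \<longlonglongrightarrow> (\<integral>x. 0 \<partial>\<nu>)"
  proof (rule integral_dominated_convergence[where w="\<lambda>x. norm (g x)"])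
    show "(\<lambda>x. 0::real) \<in> borel_measurable \<nu>" by simp
    show "(\<lambda>x. indicator (- Bx (real n)) x * norm (g x)) \<in> borel_measurable \<nu>" for n
      using Bm gm by measurable
    show "integrable \<nu> (\<lambda>x. norm (g x))" using gi by simp
    show "AE x in \<nu>. (\<lambda>n. indicator (- Bx (real n)) x * norm (g x)) \<longlonglongrightarrow> 0"
    proof (intro AE_I2 tendsto_eventually)
      fix x :: "real^'n"
      have "x \<in> Bx (real n)" if "n \<ge> nat \<lceil>norm x\<rceil>" for n
      proof -
        have "norm x \<le> real n" using real_nat_ceiling_ge[of "norm x"] that
          by (meson of_nat_le_iff order_trans)
        then show ?thesis using component_le_norm_cart[of x] unfolding Bx_def by (auto intro: order_trans)
      qed
      then show "\<forall>\<^sub>F n in sequentially. indicator (- Bx (real n)) x * norm (g x) = 0"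
        unfolding eventually_sequentially by (intro exI[of _ "nat \<lceil>norm x\<rceil>"]) auto
    qed
    show "AE x in \<nu>. norm (indicator (- Bx (real n)) x * norm (g x)) \<le> norm (g x)" for n
      by (auto simp: indicator_def)
  qed
  then have "(\<lambda>n. \<integral>x. indicator (- Bx (real n)) x * norm (g x) \<partial>\<nu>) \<longlonglongrightarrow> 0" by simp
  from order_tendstoD(2)[OF this e] show ?thesis by (auto simp: eventually_sequentially)
qed



lemma psi_id:
  assumes "x \<in> Bx r" "r > 0"
  shows "psi r x = x"
proof -
  have "r * arcsin (sin (x$i / r)) = x$i" for i
  proof -
    have "\<bar>x$i\<bar> \<le> r" using assms(1) by (auto simp: Bx_def)
    then have "\<bar>x$i / r\<bar> \<le> 1" using assms(2) by (simp add: abs_divide)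
    moreover have "1 \<le> pi / 2" using pi_gt3 by simp
    ultimately have "-(pi/2) \<le> x$i / r" "x$i / r \<le> pi/2" unfolding abs_le_iff by linarith+
    then have "arcsin (sin (x$i / r)) = x$i / r" by (rule arcsin_sin)
    then show ?thesis using assms(2) by simp
  qed
  then show ?thesis by (simp add: psi_def vec_eq_iff)
qed

lemma bm_cont: "continuous_on UNIV h \<Longrightarrow> (\<And>x. norm (h x) \<le> B) \<Longrightarrow> bm h"
  unfolding bm_def by (auto intro: borel_measurable_continuous_onI)

lemma tail_est:
  fixes g :: "real^'n::finite \<Rightarrow> complex"
  assumes gi: "integrable \<nu> g" and s: "sets \<nu> = sets borel"
    and hc: "continuous_on UNIV h" and hB: "\<And>x. norm (h x) \<le> B"
    and r: "r > 0" and tl: "(\<integral>x. indicator (- Bx r) x * norm (g x) \<partial>\<nu>) < e"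
  shows "norm (cint (\<nu>, g) (\<lambda>x. h x - h (psi r x))) \<le> 2 * B * e"
proof -
  have B0: "0 \<le> B" using hB[of 0] norm_ge_zero order_trans by blast
  have bmh: "bm h" by (rule bm_cont[OF hc hB])
  have bmhp: "bm (\<lambda>x. h (psi r x))"
    by (rule bm_cont[where B=B]) (auto intro!: continuous_on_compose2[OF hc continuous_psi] hB)
  have Bm: "- Bx r \<in> sets \<nu>" using s by (simp add: borel_open[OF open_Compl[OF Bx_closed]])
  have "norm (cint (\<nu>, g) (\<lambda>x. h x - h (psi r x))) \<le> (\<integral>x. norm (h x - h (psi r x)) * norm (g x) \<partial>\<nu>)"
    using cint_norm_bound[of "(\<nu>, g)"] by simp
  also have "\<dots> \<le> (\<integral>x. (2 * B) * (indicator (- Bx r) x * norm (g x)) \<partial>\<nu>)"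
  proof (rule integral_mono)
    show "integrable \<nu> (\<lambda>x. norm (h x - h (psi r x)) * norm (g x))"
      by (rule integrable_bm_norm[OF gi s bm_diff[OF bmh bmhp]])
    show "integrable \<nu> (\<lambda>x. (2 * B) * (indicator (- Bx r) x * norm (g x)))"
      using integrable_real_mult_indicator[OF Bm integrable_norm[OF gi]] by (intro integrable_mult_right) (simp add: mult.commute)
    fix x
    show "norm (h x - h (psi r x)) * norm (g x) \<le> (2 * B) * (indicator (- Bx r) x * norm (g x))"
    proof (cases "x \<in> Bx r")
      case True then show ?thesis using psi_id[OF True r] by simp
    next
      case False
      have "norm (h x - h (psi r x)) \<le> 2 * B" using hB[of x] hB[of "psi r x"] norm_triangle_ineq4[of "h x" "h (psi r x)"] by simp
      then show ?thesis using False by (simp add: mult_right_mono)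
    qed
  qed
  also have "\<dots> = 2 * B * (\<integral>x. indicator (- Bx r) x * norm (g x) \<partial>\<nu>)" by simp
  also have "\<dots> \<le> 2 * B * e" using tl B0 by (intro mult_left_mono) auto
  finally show ?thesis .
qed

lemma approx_est:
  fixes g :: "real^'n::finite \<Rightarrow> complex"
  assumes gi: "integrable \<nu> g" and s: "sets \<nu> = sets borel"
    and k: "bm k" and kb: "\<And>x. norm (k x) \<le> e"
  shows "norm (cint (\<nu>, g) k) \<le> e * (\<integral>x. norm (g x) \<partial>\<nu>)"
proof -
  have "norm (cint (\<nu>, g) k) \<le> (\<integral>x. norm (k x) * norm (g x) \<partial>\<nu>)"
    using cint_norm_bound[of "(\<nu>, g)"] by simp
  also have "\<dots> \<le> (\<integral>x. e * norm (g x) \<partial>\<nu>)"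
    using integrable_bm_norm[OF gi s k] gi kb by (intro integral_mono) (auto intro: mult_right_mono)
  finally show ?thesis by simp
qed

lemma fourier_unique:
  assumes mu: "\<mu> \<in> cmeas" and mu': "\<mu>' \<in> cmeas"
    and ch: "\<And>w. cint \<mu> (\<lambda>x. cis (w \<bullet> x)) = cint \<mu>' (\<lambda>x. cis (w \<bullet> x))"
    and hc: "continuous_on UNIV h" and hB: "\<And>x. norm (h x) \<le> B"
  shows "cint \<mu> h = cint \<mu>' h"
proof -
  obtain \<nu> g where m: "\<mu> = (\<nu>, g)" "sets \<nu> = sets borel" "integrable \<nu> g" using mu by (elim cmeasE) blast
  obtain \<nu>' g' where m': "\<mu>' = (\<nu>', g')" "sets \<nu>' = sets borel" "integrable \<nu>' g'" using mu' by (elim cmeasE) blast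
  have B0: "0 \<le> B" using hB[of 0] norm_ge_zero order_trans by blast
  define K where "K = 4 * B + (\<integral>x. norm (g x) \<partial>\<nu>) + (\<integral>x. norm (g' x) \<partial>\<nu>') + 1"
  have K0: "K > 0" unfolding K_def using B0
    by (smt (verit) integral_nonneg_AE AE_I2 norm_ge_zero)
  have bmh: "bm h" by (rule bm_cont[OF hc hB])
  have key: "norm (cint \<mu> h - cint \<mu>' h) \<le> e * K" if e: "e > 0" for e
  proof -
    obtain N1 where N1: "\<forall>n\<ge>N1. (\<integral>x. indicator (- Bx (real n)) x * norm (g x) \<partial>\<nu>) < e"
      using tail[OF m(3) m(2) e] by blast
    obtain N2 where N2: "\<forall>n\<ge>N2. (\<integral>x. indicator (- Bx (real n)) x * norm (g' x) \<partial>\<nu>') < e"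
      using tail[OF m'(3) m'(2) e] by blast
    define r where "r = real (Suc (max N1 N2))"
    have r: "r > 0" by (simp add: r_def)
    have t1: "(\<integral>x. indicator (- Bx r) x * norm (g x) \<partial>\<nu>) < e" using N1[rule_format, of "Suc (max N1 N2)"] unfolding r_def by simp
    have t2: "(\<integral>x. indicator (- Bx r) x * norm (g' x) \<partial>\<nu>') < e" using N2[rule_format, of "Suc (max N1 N2)"] unfolding r_def by simp
    obtain p where p: "p \<in> trigs" "\<And>x. norm (h (psi r x) - p x) \<le> e"
      using trig_approx[OF hc r e] by blast
    have bmhp: "bm (\<lambda>x. h (psi r x))"
      by (rule bm_cont[where B=B]) (auto intro!: continuous_on_compose2[OF hc continuous_psi] hB)
    have bmp: "bm p" using p(1) by (rule trigs_bm)
    have dec: "cint \<rho> h = cint \<rho> (\<lambda>x. h x - h (psi r x)) + cint \<rho> (\<lambda>x. h (psi r x) - p x) + cint \<rho> p"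
      if "\<rho> \<in> cmeas" for \<rho>
      using that bmh bmhp bmp by (simp add: cint_diff bm_diff)
    have pe: "cint \<mu> p = cint \<mu>' p" by (rule trigs_cint[OF mu mu' ch p(1)])
    have "cint \<mu> h - cint \<mu>' h = (cint \<mu> (\<lambda>x. h x - h (psi r x)) - cint \<mu>' (\<lambda>x. h x - h (psi r x)))
        + (cint \<mu> (\<lambda>x. h (psi r x) - p x) - cint \<mu>' (\<lambda>x. h (psi r x) - p x))"
      using dec[OF mu] dec[OF mu'] pe by simp
    also have "norm \<dots> \<le> (2 * B * e + 2 * B * e) + (e * (\<integral>x. norm (g x) \<partial>\<nu>) + e * (\<integral>x. norm (g' x) \<partial>\<nu>'))"
    proof (rule order_trans[OF norm_triangle_ineq add_mono])
      show "norm (cint \<mu> (\<lambda>x. h x - h (psi r x)) - cint \<mu>' (\<lambda>x. h x - h (psi r x))) \<le> 2 * B * e + 2 * B * e"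
        using tail_est[OF m(3) m(2) hc hB r t1] tail_est[OF m'(3) m'(2) hc hB r t2] m(1) m'(1)
        by (intro order_trans[OF norm_triangle_ineq4 add_mono]) auto
      show "norm (cint \<mu> (\<lambda>x. h (psi r x) - p x) - cint \<mu>' (\<lambda>x. h (psi r x) - p x))
          \<le> e * (\<integral>x. norm (g x) \<partial>\<nu>) + e * (\<integral>x. norm (g' x) \<partial>\<nu>')"
        using approx_est[OF m(3) m(2) bm_diff[OF bmhp bmp] p(2)] approx_est[OF m'(3) m'(2) bm_diff[OF bmhp bmp] p(2)] m(1) m'(1)
        by (intro order_trans[OF norm_triangle_ineq4 add_mono]) auto
    qed
    also have "\<dots> \<le> e * K" unfolding K_def using e by (simp add: algebra_simps)
    finally show ?thesis .
  qed
  show ?thesis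
  proof (rule ccontr)
    assume ne: "cint \<mu> h \<noteq> cint \<mu>' h"
    define d where "d = norm (cint \<mu> h - cint \<mu>' h)"
    have d0: "d > 0" using ne by (simp add: d_def)
    have "d \<le> d / (2 * K) * K" unfolding d_def by (rule key) (use d0 K0 d_def in simp)
    also have "\<dots> = d / 2" using K0 by simp
    finally show False using d0 by simp
  qed
qed



lemma lborel_translate_integral:
  fixes F :: "real^'n::finite \<Rightarrow> complex"
  assumes [measurable]: "F \<in> borel_measurable borel"
  shows "(\<integral>y. F y \<partial>lborel) = (\<integral>u. F (x + u) \<partial>lborel)"
proof -
  have "(\<integral>y. F y \<partial>lborel) = (\<integral>y. F y \<partial>distr lborel borel ((+) x))" by (simp add: lborel_distr_plus)
  also have "\<dots> = (\<integral>u. F (x + u) \<partial>lborel)" by (rule integral_distr) auto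
  finally show ?thesis .
qed

lemma lborel_translate_nn_integral:
  fixes F :: "real^'n::finite \<Rightarrow> ennreal"
  assumes [measurable]: "F \<in> borel_measurable borel"
  shows "(\<integral>\<^sup>+y. F y \<partial>lborel) = (\<integral>\<^sup>+u. F (x + u) \<partial>lborel)"
proof -
  have "(\<integral>\<^sup>+y. F y \<partial>lborel) = (\<integral>\<^sup>+y. F y \<partial>distr lborel borel ((+) x))" by (simp add: lborel_distr_plus)
  also have "\<dots> = (\<integral>\<^sup>+u. F (x + u) \<partial>lborel)" by (rule nn_integral_distr) auto
  finally show ?thesis .
qed

definition phiV :: "(real^'n::finite \<Rightarrow> real) \<Rightarrow> real^'n \<Rightarrow> complex" where
  "phiV fV w = (\<integral>u. complex_of_real (fV u) * cis (w \<bullet> u) \<partial>lborel)"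

lemma conv_integrable:
  fixes fV :: "real^'n::finite \<Rightarrow> real"
  assumes mu: "(\<nu>, g) \<in> cmeas" and fm[measurable]: "fV \<in> borel_measurable borel" and fnn: "\<And>x. fV x \<ge> 0"
    and nn: "(\<integral>\<^sup>+x. ennreal (fV x) \<partial>lborel) = 1"
    and k[measurable]: "k \<in> borel_measurable borel" and kb: "\<And>y. norm (k y) \<le> 1"
  shows "integrable (\<nu> \<Otimes>\<^sub>M lborel) (\<lambda>(x, y). k y * (complex_of_real (fV (y - x)) * g x))"
proof -
  obtain s: "sets \<nu> = sets borel" and fin: "finite_measure \<nu>" and gm[measurable]: "g \<in> borel_measurable borel"
    and gi: "integrable \<nu> g"
    using mu by (auto simp: cmeas_def)
  interpret finite_measure \<nu> by (rule fin)
  interpret pair_sigma_finite \<nu> lborel ..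
  have meq: "borel_measurable (\<nu> \<Otimes>\<^sub>M lborel) = borel_measurable (borel \<Otimes>\<^sub>M borel)"
    by (rule measurable_cong_sets[OF sets_pair_measure_cong[OF s sets_lborel] refl])
  have Fm: "(\<lambda>(x, y). k y * (complex_of_real (fV (y - x)) * g x)) \<in> borel_measurable (\<nu> \<Otimes>\<^sub>M lborel)"
    unfolding meq by measurable
  show ?thesis
    unfolding integrable_iff_bounded
  proof (intro conjI Fm)
    have "(\<integral>\<^sup>+z. ennreal (norm (case z of (x, y) \<Rightarrow> k y * (complex_of_real (fV (y - x)) * g x))) \<partial>(\<nu> \<Otimes>\<^sub>M lborel))
        \<le> (\<integral>\<^sup>+z. ennreal (fV (snd z - fst z)) * ennreal (norm (g (fst z))) \<partial>(\<nu> \<Otimes>\<^sub>M lborel))"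
      using kb fnn by (intro nn_integral_mono) (auto simp: norm_mult ennreal_mult'[symmetric] intro!: ennreal_leI mult_left_le_one_le)
    also have "\<dots> = (\<integral>\<^sup>+x. \<integral>\<^sup>+y. ennreal (fV (y - x)) * ennreal (norm (g x)) \<partial>lborel \<partial>\<nu>)"
      by (subst lborel.nn_integral_fst[symmetric]) (auto simp: meq)
    also have "\<dots> = (\<integral>\<^sup>+x. ennreal (norm (g x)) \<partial>\<nu>)"
    proof (rule nn_integral_cong)
      fix x
      have "(\<integral>\<^sup>+y. ennreal (fV (y - x)) * ennreal (norm (g x)) \<partial>lborel) = (\<integral>\<^sup>+y. ennreal (fV (y - x)) \<partial>lborel) * ennreal (norm (g x))"
        by (rule nn_integral_multc) measurable
      also have "(\<integral>\<^sup>+y. ennreal (fV (y - x)) \<partial>lborel) = (\<integral>\<^sup>+u. ennreal (fV (x + u - x)) \<partial>lborel)"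
        by (rule lborel_translate_nn_integral) measurable
      also have "\<dots> = 1" using nn by simp
      finally show "(\<integral>\<^sup>+y. ennreal (fV (y - x)) * ennreal (norm (g x)) \<partial>lborel) = ennreal (norm (g x))" by simp
    qed
    also have "\<dots> < \<infinity>" using gi by (simp add: integrable_iff_bounded)
    finally show "(\<integral>\<^sup>+z. ennreal (norm (case z of (x, y) \<Rightarrow> k y * (complex_of_real (fV (y - x)) * g x))) \<partial>(\<nu> \<Otimes>\<^sub>M lborel)) < \<infinity>" .
  qed
qed



lemma cis_meas[measurable]: "(\<lambda>y. cis (w \<bullet> y)) \<in> borel_measurable borel"
  by (intro borel_measurable_continuous_onI continuous_intros)

lemma cis_meas': "sets \<nu> = sets borel \<Longrightarrow> (\<lambda>y. cis (w \<bullet> y)) \<in> borel_measurable \<nu>"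
  using measurable_cong_sets[of \<nu> borel borel borel] cis_meas by simp

lemma conv_meas:
  fixes fV :: "real^'n::finite \<Rightarrow> real"
  assumes mu: "\<mu> \<in> cmeas" and fm[measurable]: "fV \<in> borel_measurable borel"
  shows "conv_op fV \<mu> \<in> borel_measurable borel"
proof -
  obtain \<nu> g where m: "\<mu> = (\<nu>, g)" "finite_measure \<nu>" "sets \<nu> = sets borel" "g \<in> borel_measurable borel"
    using mu by (elim cmeasE) blast
  interpret finite_measure \<nu> by (rule m(2))
  note [measurable] = m(4)
  have meq: "borel_measurable (borel \<Otimes>\<^sub>M \<nu>) = borel_measurable (borel \<Otimes>\<^sub>M borel)"
    by (rule measurable_cong_sets[OF sets_pair_measure_cong[OF refl m(3)] refl])
  have "(\<lambda>(y, x). complex_of_real (fV (y - x)) * g x) \<in> borel_measurable (borel \<Otimes>\<^sub>M \<nu>)"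
    unfolding meq by measurable
  then have "(\<lambda>y. \<integral>x. complex_of_real (fV (y - x)) * g x \<partial>\<nu>) \<in> borel_measurable borel"
    by (rule borel_measurable_lebesgue_integral[where f="\<lambda>y x. complex_of_real (fV (y - x)) * g x", simplified])
  then show ?thesis by (simp add: conv_op_def cint_def m(1))
qed

lemma conv_fourier:
  fixes fV :: "real^'n::finite \<Rightarrow> real"
  assumes mu: "\<mu> \<in> cmeas" and fm[measurable]: "fV \<in> borel_measurable borel" and fnn: "\<And>x. fV x \<ge> 0"
    and nn: "(\<integral>\<^sup>+x. ennreal (fV x) \<partial>lborel) = 1"
  shows "(\<integral>y. cis (w \<bullet> y) * conv_op fV \<mu> y \<partial>lborel) = phiV fV w * cint \<mu> (\<lambda>x. cis (w \<bullet> x))"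
proof -
  obtain \<nu> g where m: "\<mu> = (\<nu>, g)" "finite_measure \<nu>" "sets \<nu> = sets borel" "g \<in> borel_measurable borel"
    using mu by (elim cmeasE) blast
  interpret finite_measure \<nu> by (rule m(2))
  interpret pair_sigma_finite \<nu> lborel ..
  note [measurable] = m(4)
  have int: "integrable (\<nu> \<Otimes>\<^sub>M lborel) (\<lambda>(x, y). cis (w \<bullet> y) * (complex_of_real (fV (y - x)) * g x))"
    by (rule conv_integrable[OF mu[unfolded m(1)] fm fnn nn]) auto
  have "(\<integral>y. cis (w \<bullet> y) * conv_op fV \<mu> y \<partial>lborel)
      = (\<integral>y. \<integral>x. cis (w \<bullet> y) * (complex_of_real (fV (y - x)) * g x) \<partial>\<nu> \<partial>lborel)"
    by (simp add: conv_op_def cint_def m(1))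
  also have "\<dots> = (\<integral>x. \<integral>y. cis (w \<bullet> y) * (complex_of_real (fV (y - x)) * g x) \<partial>lborel \<partial>\<nu>)"
    by (rule Fubini_integral[OF int])
  also have "\<dots> = (\<integral>x. phiV fV w * (cis (w \<bullet> x) * g x) \<partial>\<nu>)"
  proof (rule Bochner_Integration.integral_cong[OF refl])
    fix x
    have "(\<integral>y. cis (w \<bullet> y) * (complex_of_real (fV (y - x)) * g x) \<partial>lborel)
        = (\<integral>y. cis (w \<bullet> y) * complex_of_real (fV (y - x)) \<partial>lborel) * g x"
      by (subst integral_mult_left_zero[symmetric]) (simp add: mult.assoc)
    also have "(\<integral>y. cis (w \<bullet> y) * complex_of_real (fV (y - x)) \<partial>lborel)
        = (\<integral>u. cis (w \<bullet> (x + u)) * complex_of_real (fV (x + u - x)) \<partial>lborel)"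
      by (rule lborel_translate_integral) measurable
    also have "\<dots> = (\<integral>u. cis (w \<bullet> x) * (complex_of_real (fV u) * cis (w \<bullet> u)) \<partial>lborel)"
      by (simp add: inner_add_right cis_mult[symmetric] ac_simps)
    also have "\<dots> = cis (w \<bullet> x) * phiV fV w" by (simp add: phiV_def)
    finally show "(\<integral>y. cis (w \<bullet> y) * (complex_of_real (fV (y - x)) * g x) \<partial>lborel) = phiV fV w * (cis (w \<bullet> x) * g x)"
      by (simp add: ac_simps)
  qed
  also have "\<dots> = phiV fV w * cint \<mu> (\<lambda>x. cis (w \<bullet> x))" by (simp add: cint_def m(1))
  finally show ?thesis .
qed

lemma isCont_ft:
  assumes mu: "\<mu> \<in> cmeas"
  shows "isCont (\<lambda>w. cint \<mu> (\<lambda>x. cis (w \<bullet> x))) w"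
  unfolding continuous_at_sequentially
proof safe
  obtain \<nu> g where m: "\<mu> = (\<nu>, g)" "g \<in> borel_measurable \<nu>" "integrable \<nu> g" "sets \<nu> = sets borel"
    using mu by (elim cmeasE) blast
  note [measurable] = m(2) cis_meas'[OF m(4)]
  fix X :: "nat \<Rightarrow> real^'a" assume X: "X \<longlonglongrightarrow> w"
  show "((\<lambda>w. cint \<mu> (\<lambda>x. cis (w \<bullet> x))) \<circ> X) \<longlonglongrightarrow> cint \<mu> (\<lambda>x. cis (w \<bullet> x))"
    unfolding comp_def cint_def m(1) fst_conv snd_conv
  proof (rule integral_dominated_convergence[where w="\<lambda>x. norm (g x)"])
    show "(\<lambda>x. cis (w \<bullet> x) * g x) \<in> borel_measurable \<nu>" using m(2) by measurable
    show "(\<lambda>x. cis (X i \<bullet> x) * g x) \<in> borel_measurable \<nu>" for i using m(2) by measurable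
    show "integrable \<nu> (\<lambda>x. norm (g x))" using m(3) by simp
    show "AE x in \<nu>. (\<lambda>i. cis (X i \<bullet> x) * g x) \<longlonglongrightarrow> cis (w \<bullet> x) * g x"
      using X by (intro AE_I2 tendsto_intros)
    show "AE x in \<nu>. norm (cis (X i \<bullet> x) * g x) \<le> norm (g x)" for i
      by (simp add: norm_mult)
  qed
qed

lemma conv_unique:
  fixes fV :: "real^'n::finite \<Rightarrow> real"
  assumes mu: "\<mu> \<in> cmeas" and mu': "\<mu>' \<in> cmeas"
    and fm[measurable]: "fV \<in> borel_measurable borel" and fnn: "\<And>x. fV x \<ge> 0"
    and nn: "(\<integral>\<^sup>+x. ennreal (fV x) \<partial>lborel) = 1"
    and ae: "AE w in lborel. phiV fV w \<noteq> 0"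
    and eq: "AE y in lborel. conv_op fV \<mu> y = conv_op fV \<mu>' y"
    and hc: "continuous_on UNIV h" and hB: "\<And>x. norm (h x) \<le> B"
  shows "cint \<mu> h = cint \<mu>' h"
proof (rule fourier_unique[OF mu mu' _ hc hB])
  define A where "A w = cint \<mu> (\<lambda>x. cis (w \<bullet> x))" for w :: "real^'n"
  define A' where "A' w = cint \<mu>' (\<lambda>x. cis (w \<bullet> x))" for w :: "real^'n"
  have pe: "phiV fV w * A w = phiV fV w * A' w" for w
  proof -
    have "(\<integral>y. cis (w \<bullet> y) * conv_op fV \<mu> y \<partial>lborel) = (\<integral>y. cis (w \<bullet> y) * conv_op fV \<mu>' y \<partial>lborel)"
      using conv_meas[OF mu fm] conv_meas[OF mu' fm] eq
      by (intro integral_cong_AE) (auto intro!: borel_measurable_times)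
    then show ?thesis using conv_fourier[OF mu fm fnn nn, of w] conv_fourier[OF mu' fm fnn nn, of w]
      by (simp add: A_def A'_def)
  qed
  have cA: "continuous_on UNIV A" "continuous_on UNIV A'"
    unfolding A_def A'_def using isCont_ft[OF mu] isCont_ft[OF mu']
    by (auto intro!: continuous_at_imp_continuous_on)
  define U where "U = {w. A w \<noteq> A' w}"
  have oU: "open U" unfolding U_def using cA by (intro open_Collect_neq) auto
  have "AE w in lborel. w \<notin> U" using ae pe by (auto simp: U_def)
  moreover have "U \<in> sets lborel" using oU by (simp add: borel_open)
  ultimately have "U \<in> null_sets lborel" by (simp add: AE_iff_null_sets)
  then have "negligible U" by (simp add: negligible_iff_null_sets null_sets_completionI)
  then have "U = {}" using open_not_negligible[OF oU] by blast
  then show "cint \<mu> (\<lambda>x. cis (w \<bullet> x)) = cint \<mu>' (\<lambda>x. cis (w \<bullet> x))" for w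
    by (auto simp: U_def A_def A'_def)
qed



definition msum :: "'a measure \<Rightarrow> 'a measure \<Rightarrow> 'a measure" where
  "msum N1 N2 = measure_of (space N1) (sets N1) (\<lambda>A. emeasure N1 A + emeasure N2 A)"

lemma msum_props:
  assumes s: "sets N2 = sets N1"
  shows "sets (msum N1 N2) = sets N1" "A \<in> sets N1 \<Longrightarrow> emeasure (msum N1 N2) A = emeasure N1 A + emeasure N2 A"
proof -
  show "sets (msum N1 N2) = sets N1" unfolding msum_def by (rule sets.sets_measure_of_eq)
  assume A: "A \<in> sets N1"
  show "emeasure (msum N1 N2) A = emeasure N1 A + emeasure N2 A"
    unfolding msum_def
  proof (rule emeasure_measure_of_sigma[OF sets.sigma_algebra_axioms _ _ A])
    show "positive (sets N1) (\<lambda>A. emeasure N1 A + emeasure N2 A)" by (simp add: positive_def)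
    show "countably_additive (sets N1) (\<lambda>A. emeasure N1 A + emeasure N2 A)"
      unfolding countably_additive_def
    proof safe
      fix F :: "nat \<Rightarrow> _" assume F: "range F \<subseteq> sets N1" "disjoint_family F" "\<Union> (range F) \<in> sets N1"
      have F2: "range F \<subseteq> sets N2" using F(1) s by simp
      show "(\<Sum>i. emeasure N1 (F i) + emeasure N2 (F i)) = emeasure N1 (\<Union> (range F)) + emeasure N2 (\<Union> (range F))"
        using suminf_emeasure[OF F(1) F(2)] suminf_emeasure[OF F2 F(2)]
        by (simp add: suminf_add[symmetric])
    qed
  qed
qed

lemma density_real_RN:
  assumes fin: "finite_measure N3" and fin1: "finite_measure N1" and s: "sets N1 = sets N3"
    and ac: "absolutely_continuous N3 N1"
  shows "N1 = density N3 (\<lambda>x. ennreal (enn2real (RN_deriv N3 N1 x)))"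
proof -
  interpret finite_measure N3 by (rule fin)
  interpret N1: finite_measure N1 by (rule fin1)
  have "N1 = density N3 (RN_deriv N3 N1)" using density_RN_deriv[OF ac s] by simp
  also have "\<dots> = density N3 (\<lambda>x. ennreal (enn2real (RN_deriv N3 N1 x)))"
  proof (rule density_cong)
    from RN_deriv_finite[OF N1.sigma_finite_measure_axioms ac s]
    show "AE x in N3. RN_deriv N3 N1 x = ennreal (enn2real (RN_deriv N3 N1 x))"
      by eventually_elim (auto simp: less_top)
  qed auto
  finally show ?thesis .
qed

lemma cmeas_add:
  assumes mu1: "\<mu>1 \<in> cmeas" and mu2: "\<mu>2 \<in> cmeas"
  shows "\<exists>\<mu>3\<in>cmeas. \<forall>h. h \<in> borel_measurable borel \<longrightarrow> integrable (fst \<mu>1) (\<lambda>x. h x * snd \<mu>1 x)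
     \<longrightarrow> integrable (fst \<mu>2) (\<lambda>x. h x * snd \<mu>2 x) \<longrightarrow> cint \<mu>3 h = cint \<mu>1 h + cint \<mu>2 h"
proof -
  obtain N1 g1 where m1: "\<mu>1 = (N1, g1)" "finite_measure N1" "sets N1 = sets borel"
    "g1 \<in> borel_measurable N1" "g1 \<in> borel_measurable borel" "integrable N1 g1"
    using mu1 by (elim cmeasE) blast
  obtain N2 g2 where m2: "\<mu>2 = (N2, g2)" "finite_measure N2" "sets N2 = sets borel"
    "g2 \<in> borel_measurable N2" "g2 \<in> borel_measurable borel" "integrable N2 g2"
    using mu2 by (elim cmeasE) blast
  define N3 where "N3 = msum N1 N2"
  have s21: "sets N2 = sets N1" using m1(3) m2(3) by simp
  have s3: "sets N3 = sets borel" using msum_props(1)[OF s21] m1(3) by (simp add: N3_def)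
  have e3: "emeasure N3 A = emeasure N1 A + emeasure N2 A" if "A \<in> sets borel" for A
    using msum_props(2)[OF s21] that m1(3) by (simp add: N3_def)
  interpret F1: finite_measure N1 by (rule m1(2))
  interpret F2: finite_measure N2 by (rule m2(2))
  have sp3: "space N3 = UNIV" using sets_eq_imp_space_eq[OF s3] by simp
  have fin3: "finite_measure N3"
  proof
    have "emeasure N3 (space N3) = emeasure N1 UNIV + emeasure N2 UNIV" using e3[of UNIV] sp3 by simp
    also have "\<dots> \<noteq> \<infinity>" using F1.emeasure_finite[of UNIV] F2.emeasure_finite[of UNIV]
      sets_eq_imp_space_eq[OF m1(3)] sets_eq_imp_space_eq[OF m2(3)] by (simp add: ennreal_add_eq_top)
    finally show "emeasure N3 (space N3) \<noteq> \<infinity>" .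
  qed
  interpret F3: finite_measure N3 by (rule fin3)
  have ac1: "absolutely_continuous N3 N1" and ac2: "absolutely_continuous N3 N2"
    unfolding absolutely_continuous_def
    using e3 s3 m1(3) m2(3) by (auto simp: null_sets_def)
  define r1 where "r1 x = enn2real (RN_deriv N3 N1 x)" for x
  define r2 where "r2 x = enn2real (RN_deriv N3 N2 x)" for x
  have d1: "N1 = density N3 (\<lambda>x. ennreal (r1 x))" unfolding r1_def
    by (rule density_real_RN[OF fin3 m1(2) _ ac1]) (simp add: s3 m1(3))
  have d2: "N2 = density N3 (\<lambda>x. ennreal (r2 x))" unfolding r2_def
    by (rule density_real_RN[OF fin3 m2(2) _ ac2]) (simp add: s3 m2(3))
  have meq: "borel_measurable N3 = borel_measurable borel" by (rule measurable_cong_sets[OF s3 refl])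
  have r1m[measurable]: "r1 \<in> borel_measurable borel" unfolding r1_def meq[symmetric] by measurable
  have r2m[measurable]: "r2 \<in> borel_measurable borel" unfolding r2_def meq[symmetric] by measurable
  note [measurable] = m1(5) m2(5)
  have INT1: "integrable N1 F \<longleftrightarrow> integrable N3 (\<lambda>x. r1 x *\<^sub>R F x)" and
    I1: "integral\<^sup>L N1 F = (\<integral>x. r1 x *\<^sub>R F x \<partial>N3)" if "F \<in> borel_measurable borel" for F :: "_ \<Rightarrow> complex"
  proof -
    have Fm: "F \<in> borel_measurable N3" using that measurable_cong_sets[OF s3 refl, of "borel :: complex measure"] by simp
    show "integrable N1 F \<longleftrightarrow> integrable N3 (\<lambda>x. r1 x *\<^sub>R F x)"
      by (subst d1) (rule integrable_density[OF Fm], simp add: meq, simp add: r1_def)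
    show "integral\<^sup>L N1 F = (\<integral>x. r1 x *\<^sub>R F x \<partial>N3)"
      by (subst d1) (rule integral_density[OF Fm], simp add: meq, simp add: r1_def)
  qed
  have INT2: "integrable N2 F \<longleftrightarrow> integrable N3 (\<lambda>x. r2 x *\<^sub>R F x)" and
    I2: "integral\<^sup>L N2 F = (\<integral>x. r2 x *\<^sub>R F x \<partial>N3)" if "F \<in> borel_measurable borel" for F :: "_ \<Rightarrow> complex"
  proof -
    have Fm: "F \<in> borel_measurable N3" using that measurable_cong_sets[OF s3 refl, of "borel :: complex measure"] by simp
    show "integrable N2 F \<longleftrightarrow> integrable N3 (\<lambda>x. r2 x *\<^sub>R F x)"
      by (subst d2) (rule integrable_density[OF Fm], simp add: meq, simp add: r2_def)
    show "integral\<^sup>L N2 F = (\<integral>x. r2 x *\<^sub>R F x \<partial>N3)"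
      by (subst d2) (rule integral_density[OF Fm], simp add: meq, simp add: r2_def)
  qed
  define g3 where "g3 x = r1 x *\<^sub>R g1 x + r2 x *\<^sub>R g2 x" for x
  have g3m: "g3 \<in> borel_measurable borel" unfolding g3_def by measurable
  have g3i: "integrable N3 g3" unfolding g3_def
    using INT1[of g1] INT2[of g2] m1(5,6) m2(5,6) by (intro Bochner_Integration.integrable_add) auto
  have mu3: "(N3, g3) \<in> cmeas" using fin3 s3 g3m g3i by (simp add: cmeas_def)
  show ?thesis
  proof (intro bexI[OF _ mu3] allI impI)
    fix h :: "real^'a \<Rightarrow> complex"
    assume hm[measurable]: "h \<in> borel_measurable borel"
      and i1: "integrable (fst \<mu>1) (\<lambda>x. h x * snd \<mu>1 x)" and i2: "integrable (fst \<mu>2) (\<lambda>x. h x * snd \<mu>2 x)"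
    have i1': "integrable N3 (\<lambda>x. r1 x *\<^sub>R (h x * g1 x))" using i1 INT1[of "\<lambda>x. h x * g1 x"] m1(1) by simp
    have i2': "integrable N3 (\<lambda>x. r2 x *\<^sub>R (h x * g2 x))" using i2 INT2[of "\<lambda>x. h x * g2 x"] m2(1) by simp
    have "cint (N3, g3) h = (\<integral>x. r1 x *\<^sub>R (h x * g1 x) + r2 x *\<^sub>R (h x * g2 x) \<partial>N3)"
      unfolding cint_def g3_def by (simp add: algebra_simps)
    also have "\<dots> = (\<integral>x. r1 x *\<^sub>R (h x * g1 x) \<partial>N3) + (\<integral>x. r2 x *\<^sub>R (h x * g2 x) \<partial>N3)"
      using i1' i2' by simp
    also have "\<dots> = cint \<mu>1 h + cint \<mu>2 h"
      using I1[of "\<lambda>x. h x * g1 x"] I2[of "\<lambda>x. h x * g2 x"] m1(1) m2(1) by (simp add: cint_def)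
    finally show "cint (N3, g3) h = cint \<mu>1 h + cint \<mu>2 h" .
  qed
qed



lemma C0_bounded:
  assumes "lam \<in> C0"
  shows "continuous_on UNIV lam" "\<exists>B>0. \<forall>x. norm (lam x) \<le> B"
proof -
  show c: "continuous_on UNIV lam" using assms by (simp add: C0_def)
  have "(lam \<longlongrightarrow> 0) at_infinity" using assms by (simp add: C0_def)
  then have "((\<lambda>x. norm (lam x)) \<longlongrightarrow> 0) at_infinity" by (rule tendsto_norm_zero)
  then have "eventually (\<lambda>x. norm (lam x) < 1) at_infinity"
    by (rule order_tendstoD(2)) simp
  then obtain b where b: "\<And>x. b \<le> norm x \<Longrightarrow> norm (lam x) < 1" by (auto simp: eventually_at_infinity)
  have "compact (lam ` cball 0 b)"
    by (rule compact_continuous_image[OF continuous_on_subset[OF c]]) auto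
  then obtain B' where B': "\<And>y. y \<in> lam ` cball 0 b \<Longrightarrow> norm y \<le> B'"
  proof -
    have "bounded (lam ` cball 0 b)" by (rule compact_imp_bounded) fact
    then obtain B' where "\<forall>y\<in>lam ` cball 0 b. norm y \<le> B'" unfolding bounded_iff by blast
    then show ?thesis using that by blast
  qed
  show "\<exists>B>0. \<forall>x. norm (lam x) \<le> B"
  proof (intro exI[of _ "max 1 B'"] conjI allI)
    fix x
    show "norm (lam x) \<le> max 1 B'"
    proof (cases "b \<le> norm x")
      case True then show ?thesis using b[of x] by simp
    next
      case False then have "x \<in> cball 0 b" by simp
      then show ?thesis using B'[of "lam x"] by simp
    qed
  qed simp
qed

lemma cint_tv_bound:
  assumes mu: "\<mu> \<in> cmeas" and lam: "lam \<in> C0" and B: "B > 0" "\<And>x. norm (lam x) \<le> B"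
  shows "norm (cint \<mu> lam) \<le> B * tv_norm \<mu>"
proof -
  obtain \<nu> g where m: "\<mu> = (\<nu>, g)" "sets \<nu> = sets borel" "integrable \<nu> g"
    using mu by (elim cmeasE) blast
  define S where "S = {h \<in> (C0 :: (real^'a \<Rightarrow> complex) set). \<forall>x. norm (h x) \<le> 1}"
  define h where "h x = complex_of_real (1 / B) * lam x" for x
  have hS: "h \<in> S"
  proof -
    have lc: "continuous_on UNIV lam" and lt: "(lam \<longlongrightarrow> 0) at_infinity" using lam by (auto simp: C0_def)
    have "continuous_on UNIV h" unfolding h_def by (intro continuous_intros lc)
    moreover have "((\<lambda>x. complex_of_real (1 / B) * lam x) \<longlongrightarrow> complex_of_real (1 / B) * 0) at_infinity"
      by (intro tendsto_intros lt)
    then have "(h \<longlongrightarrow> 0) at_infinity" unfolding h_def by simp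
    moreover have "norm (h x) \<le> 1" for x
    proof -
      have "norm (h x) = norm (lam x) / B" using B(1) by (simp add: h_def norm_mult norm_divide)
      also have "\<dots> \<le> 1" using B(1) B(2)[of x] by simp
      finally show ?thesis .
    qed
    ultimately show ?thesis by (simp add: S_def C0_def)
  qed
  have bdd: "bdd_above ((\<lambda>h. norm (cint \<mu> h)) ` S)"
  proof (rule bdd_aboveI2)
    fix k assume "k \<in> S"
    then have kc: "continuous_on UNIV k" and kb: "\<And>x. norm (k x) \<le> 1" by (auto simp: S_def C0_def)
    have "bm k" by (rule bm_cont[OF kc kb])
    from approx_est[OF m(3) m(2) this kb] m(1)
    show "norm (cint \<mu> k) \<le> 1 * (\<integral>x. norm (g x) \<partial>\<nu>)" by simp
  qed
  have "norm (cint \<mu> h) \<le> tv_norm \<mu>"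
    unfolding tv_norm_def S_def[symmetric] by (rule cSUP_upper[OF hS bdd])
  moreover have "cint \<mu> h = complex_of_real (1 / B) * cint \<mu> lam" unfolding h_def by (rule cint_cmult)
  ultimately have "norm (cint \<mu> lam) / B \<le> tv_norm \<mu>" using B(1) by (simp add: norm_mult norm_divide)
  then show ?thesis using B(1) by (simp add: field_simps)
qed

lemma conv_add_ae:
  fixes fV :: "real^'n::finite \<Rightarrow> real"
  assumes mu1: "\<mu>1 \<in> cmeas" and mu2: "\<mu>2 \<in> cmeas" and mu3: "\<mu>3 \<in> cmeas"
    and add: "\<forall>h. h \<in> borel_measurable borel \<longrightarrow> integrable (fst \<mu>1) (\<lambda>x. h x * snd \<mu>1 x)
     \<longrightarrow> integrable (fst \<mu>2) (\<lambda>x. h x * snd \<mu>2 x) \<longrightarrow> cint \<mu>3 h = cint \<mu>1 h + cint \<mu>2 h"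
    and fm[measurable]: "fV \<in> borel_measurable borel" and fnn: "\<And>x. fV x \<ge> 0"
    and nn: "(\<integral>\<^sup>+x. ennreal (fV x) \<partial>lborel) = 1"
  shows "AE y in lborel. conv_op fV \<mu>3 y = conv_op fV \<mu>1 y + conv_op fV \<mu>2 y"
proof -
  have aei: "AE y in lborel. integrable (fst \<mu>) (\<lambda>x. complex_of_real (fV (y - x)) * snd \<mu> x)"
    if mu: "\<mu> \<in> cmeas" for \<mu>
  proof -
    obtain \<nu> g where m: "\<mu> = (\<nu>, g)" "finite_measure \<nu>"
      using mu by (elim cmeasE) blast
    interpret finite_measure \<nu> by (rule m(2))
    interpret pair_sigma_finite \<nu> lborel ..
    have "integrable (\<nu> \<Otimes>\<^sub>M lborel) (\<lambda>(x, y). 1 * (complex_of_real (fV (y - x)) * g x))"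
      by (rule conv_integrable[OF mu[unfolded m(1)] fm fnn nn]) auto
    from AE_integrable_snd[of "\<lambda>x y. 1 * (complex_of_real (fV (y - x)) * g x)", OF this] show ?thesis using m(1)
      by simp
  qed
  show ?thesis using aei[OF mu1] aei[OF mu2]
  proof eventually_elim
    case (elim y)
    then show ?case using add by (simp add: conv_op_def)
  qed
qed



lemma assm_facts:
  fixes V :: "'s \<Rightarrow> real^'n::finite" and fV :: "real^'n \<Rightarrow> real"
  assumes P: "prob_space M" and fm[measurable]: "fV \<in> borel_measurable borel" and fnn: "\<And>x. fV x \<ge> 0"
    and dV: "distributed M lborel V (\<lambda>x. ennreal (fV x))"
  shows "(\<integral>\<^sup>+x. ennreal (fV x) \<partial>lborel) = 1" and "char_fun M V w = phiV fV w"
proof -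
  interpret prob_space M by (rule P)
  have d: "distr M lborel V = density lborel (\<lambda>x. ennreal (fV x))" and Vm: "V \<in> measurable M lborel"
    using dV by (auto simp: distributed_def)
  have "(\<integral>\<^sup>+x. ennreal (fV x) \<partial>lborel) = emeasure (density lborel (\<lambda>x. ennreal (fV x))) UNIV"
    by (subst emeasure_density) auto
  also have "\<dots> = emeasure (distr M lborel V) UNIV" using d by simp
  also have "\<dots> = emeasure M (space M)" using Vm by (subst emeasure_distr) (auto simp: vimage_def)
  also have "\<dots> = 1" by (rule emeasure_space_1)
  finally show "(\<integral>\<^sup>+x. ennreal (fV x) \<partial>lborel) = 1" .
  have cm: "(\<lambda>u. cis (w \<bullet> u)) \<in> borel_measurable lborel" using cis_meas by simp
  have "char_fun M V w = (\<integral>u. cis (w \<bullet> u) \<partial>distr M lborel V)"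
    unfolding char_fun_def by (rule integral_distr[OF Vm cm, symmetric])
  also have "\<dots> = (\<integral>u. cis (w \<bullet> u) \<partial>density lborel (\<lambda>x. ennreal (fV x)))" using d by simp
  also have "\<dots> = (\<integral>u. fV u *\<^sub>R cis (w \<bullet> u) \<partial>lborel)"
    by (rule integral_density[OF cm]) (auto simp: fnn)
  also have "\<dots> = phiV fV w" by (simp add: phiV_def scaleR_conv_of_real)
  finally show "char_fun M V w = phiV fV w" .
qed



lemma sum_distributed:
  fixes V X :: "'s \<Rightarrow> real^'n::finite" and fV :: "real^'n \<Rightarrow> real"
  assumes P: "prob_space M" and fm[measurable]: "fV \<in> borel_measurable borel" and fnn: "\<And>x. fV x \<ge> 0"
    and dV: "distributed M lborel V (\<lambda>x. ennreal (fV x))"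
    and Xm[measurable]: "X \<in> borel_measurable M" and ind: "prob_space.indep_var M borel X borel V"
  shows "(\<forall>y. Im (conv_op fV (distr M borel X, \<lambda>_. 1) y) = 0) \<and>
    distributed M lborel (\<lambda>s. X s + V s) (\<lambda>y. ennreal (Re (conv_op fV (distr M borel X, \<lambda>_. 1) y)))"
proof -
  interpret prob_space M by (rule P)
  define PX where "PX = distr M borel X"
  define PV where "PV = distr M borel V"
  define fY where "fY = conv_op fV (PX, \<lambda>_. 1)"
  have nn: "(\<integral>\<^sup>+x. ennreal (fV x) \<partial>lborel) = 1" using assm_facts[OF P fm fnn dV] by simp
  have Vm': "V \<in> measurable M lborel" using dV by (auto simp: distributed_def)
  have Vm[measurable]: "V \<in> borel_measurable M" using Vm' by simp
  have dV': "PV = density lborel (\<lambda>x. ennreal (fV x))"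
  proof -
    have "PV = distr M lborel V" unfolding PV_def by (rule distr_cong) auto
    then show ?thesis using dV by (simp add: distributed_def)
  qed
  interpret PX: prob_space PX unfolding PX_def by (rule prob_space_distr) simp
  interpret PV: prob_space PV unfolding PV_def by (rule prob_space_distr) simp
  interpret PXL: pair_sigma_finite PX lborel ..
  interpret PXV: pair_sigma_finite PX PV ..
  have sPX: "sets PX = sets borel" by (simp add: PX_def)
  have sPV: "sets PV = sets borel" by (simp add: PV_def)
  have cm: "(PX, \<lambda>_. 1) \<in> cmeas" using sPX PX.finite_measure_axioms by (simp add: cmeas_def)
  have fYeq: "fY y = complex_of_real (\<integral>x. fV (y - x) \<partial>PX)" for y
    by (simp add: fY_def conv_op_def cint_def)
  have im: "\<forall>y. Im (fY y) = 0" using fYeq by simp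
  have fYm: "fY \<in> borel_measurable borel" unfolding fY_def by (rule conv_meas[OF cm fm])
  have mLX: "borel_measurable (lborel \<Otimes>\<^sub>M PX) = borel_measurable (borel \<Otimes>\<^sub>M borel)"
    by (rule measurable_cong_sets[OF sets_pair_measure_cong[OF sets_lborel sPX] refl])
  have mXL: "borel_measurable (PX \<Otimes>\<^sub>M lborel) = borel_measurable (borel \<Otimes>\<^sub>M borel)"
    by (rule measurable_cong_sets[OF sets_pair_measure_cong[OF sPX sets_lborel] refl])
  have mXV: "borel_measurable (PX \<Otimes>\<^sub>M PV) = borel_measurable (borel \<Otimes>\<^sub>M borel)"
    by (rule measurable_cong_sets[OF sets_pair_measure_cong[OF sPX sPV] refl])
  have mmx: "(\<lambda>x. ennreal (fV (y - x))) \<in> borel_measurable PX" for y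
  proof -
    have "(\<lambda>x. ennreal (fV (y - x))) \<in> borel_measurable borel" by measurable
    then show ?thesis by (simp add: measurable_cong_sets[OF sPX refl])
  qed
  define G where "G y = (\<integral>\<^sup>+x. ennreal (fV (y - x)) \<partial>PX)" for y
  have Gm: "G \<in> borel_measurable lborel"
  proof -
    have "(\<lambda>(y, x). ennreal (fV (y - x))) \<in> borel_measurable (lborel \<Otimes>\<^sub>M PX)" unfolding mLX by measurable
    then show ?thesis unfolding G_def by (rule PX.borel_measurable_nn_integral[where f="\<lambda>y x. ennreal (fV (y - x))", simplified])
  qed
  have inner: "(\<integral>\<^sup>+y. ennreal (fV (y - x)) * indicator A y \<partial>lborel) = (\<integral>\<^sup>+v. indicator A (x + v) \<partial>PV)"
    if A: "A \<in> sets borel" for A x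
  proof -
    note [measurable] = A
    have "(\<integral>\<^sup>+y. ennreal (fV (y - x)) * indicator A y \<partial>lborel) = (\<integral>\<^sup>+u. ennreal (fV (x + u - x)) * indicator A (x + u) \<partial>lborel)"
      using A by (intro lborel_translate_nn_integral) measurable
    also have "\<dots> = (\<integral>\<^sup>+v. ennreal (fV v) * indicator A (x + v) \<partial>lborel)" by simp
    also have "\<dots> = (\<integral>\<^sup>+v. indicator A (x + v) \<partial>PV)" unfolding dV'
      using A by (subst nn_integral_density) auto
    finally show ?thesis .
  qed
  have main: "(\<integral>\<^sup>+y. G y * indicator A y \<partial>lborel) = emeasure (distr M lborel (\<lambda>s. X s + V s)) A"
    if A: "A \<in> sets borel" for A
  proof -
    note [measurable] = A
    have m1: "(\<lambda>(x, y). ennreal (fV (y - x)) * indicator A y) \<in> borel_measurable (PX \<Otimes>\<^sub>M lborel)"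
      unfolding mXL using A by measurable
    have "(\<integral>\<^sup>+y. G y * indicator A y \<partial>lborel) = (\<integral>\<^sup>+y. \<integral>\<^sup>+x. ennreal (fV (y - x)) * indicator A y \<partial>PX \<partial>lborel)"
      unfolding G_def using A mmx by (intro nn_integral_cong) (simp add: nn_integral_multc)
    also have "\<dots> = (\<integral>\<^sup>+x. \<integral>\<^sup>+y. ennreal (fV (y - x)) * indicator A y \<partial>lborel \<partial>PX)"
      using PXL.Fubini'[OF m1] by simp
    also have "\<dots> = (\<integral>\<^sup>+x. \<integral>\<^sup>+v. indicator A (x + v) \<partial>PV \<partial>PX)"
      using inner[OF A] by simp
    also have "\<dots> = (\<integral>\<^sup>+z. indicator A (fst z + snd z) \<partial>(PX \<Otimes>\<^sub>M PV))"
    proof -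
      have "(\<lambda>z. indicator A (fst z + snd z) :: ennreal) \<in> borel_measurable (PX \<Otimes>\<^sub>M PV)"
        unfolding mXV using A by measurable
      from PV.nn_integral_fst[OF this] show ?thesis by simp
    qed
    also have "PX \<Otimes>\<^sub>M PV = distr M (borel \<Otimes>\<^sub>M borel) (\<lambda>s. (X s, V s))"
      using ind unfolding PX_def PV_def by (simp add: indep_var_distribution_eq)
    also have "(\<integral>\<^sup>+z. indicator A (fst z + snd z) \<partial>distr M (borel \<Otimes>\<^sub>M borel) (\<lambda>s. (X s, V s)))
        = (\<integral>\<^sup>+s. indicator A (X s + V s) \<partial>M)"
      using A by (subst nn_integral_distr) auto
    also have "\<dots> = emeasure M ((\<lambda>s. X s + V s) -` A \<inter> space M)"
    proof -
      have S: "(\<lambda>s. X s + V s) -` A \<inter> space M \<in> sets M" by measurable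
      have "(\<integral>\<^sup>+s. indicator A (X s + V s) \<partial>M) = (\<integral>\<^sup>+s. indicator ((\<lambda>s. X s + V s) -` A \<inter> space M) s \<partial>M)"
        by (intro nn_integral_cong) (auto simp: indicator_def)
      also have "\<dots> = emeasure M ((\<lambda>s. X s + V s) -` A \<inter> space M)" by (rule nn_integral_indicator[OF S])
      finally show ?thesis .
    qed
    also have "\<dots> = emeasure (distr M lborel (\<lambda>s. X s + V s)) A"
      using A by (subst emeasure_distr) auto
    finally show ?thesis .
  qed
  have Gfin: "AE y in lborel. G y \<noteq> \<infinity>"
  proof (rule nn_integral_PInf_AE[OF Gm])
    have "integral\<^sup>N lborel G = (\<integral>\<^sup>+y. G y * indicator UNIV y \<partial>lborel)" by simp
    also have "\<dots> = emeasure (distr M lborel (\<lambda>s. X s + V s)) UNIV" by (rule main) simp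
    also have "\<dots> = emeasure M (space M)" by (subst emeasure_distr) (auto simp: vimage_def)
    also have "\<dots> = 1" by (rule emeasure_space_1)
    finally show "integral\<^sup>N lborel G \<noteq> \<infinity>" by simp
  qed
  have GY: "AE y in lborel. G y = ennreal (Re (fY y))"
    using Gfin
  proof eventually_elim
    case (elim y)
    have mm: "(\<lambda>x. fV (y - x)) \<in> borel_measurable PX" using sPX measurable_cong_sets[OF sPX refl] by simp
    have "integrable PX (\<lambda>x. fV (y - x))"
      unfolding integrable_iff_bounded using mm elim fnn by (simp add: G_def less_top)
    then have "G y = ennreal (\<integral>x. fV (y - x) \<partial>PX)" unfolding G_def using fnn
      by (intro nn_integral_eq_integral) auto
    then show ?case by (simp add: fYeq)
  qed
  have dd: "distr M lborel (\<lambda>s. X s + V s) = density lborel (\<lambda>y. ennreal (Re (fY y)))"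
  proof (rule measure_eqI)
    show "sets (distr M lborel (\<lambda>s. X s + V s)) = sets (density lborel (\<lambda>y. ennreal (Re (fY y))))" by simp
    fix A assume "A \<in> sets (distr M lborel (\<lambda>s. X s + V s))"
    then have A: "A \<in> sets borel" by simp
    have "emeasure (distr M lborel (\<lambda>s. X s + V s)) A = (\<integral>\<^sup>+y. G y * indicator A y \<partial>lborel)"
      using main[OF A] by simp
    also have "\<dots> = (\<integral>\<^sup>+y. ennreal (Re (fY y)) * indicator A y \<partial>lborel)"
      using GY by (intro nn_integral_cong_AE) auto
    also have "\<dots> = emeasure (density lborel (\<lambda>y. ennreal (Re (fY y)))) A"
      using A fYm by (subst emeasure_density) auto
    finally show "emeasure (distr M lborel (\<lambda>s. X s + V s)) A = emeasure (density lborel (\<lambda>y. ennreal (Re (fY y)))) A" .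
  qed
  have "distributed M lborel (\<lambda>s. X s + V s) (\<lambda>y. ennreal (Re (fY y)))"
    unfolding distributed_def using dd fYm by auto
  then show ?thesis using im unfolding fY_def PX_def by simp
qed



theorem theorem1:
  fixes M :: "'s measure" and V :: "'s \<Rightarrow> real^'n::finite" and fV :: "real^'n \<Rightarrow> real"
  assumes "prob_space M"
    and "fV \<in> borel_measurable borel" and "\<And>x. fV x \<ge> 0"
    and "distributed M lborel V (\<lambda>x. ennreal (fV x))"
    and "AE \<omega> in lborel. char_fun M V \<omega> \<noteq> 0"
  shows "\<forall>lam \<in> C0. \<exists>T \<in> adm_dual fV.
     (\<forall>\<mu> \<in> cmeas. T (conv_op fV \<mu>) = cint \<mu> lam) \<and>
     (\<forall>T' \<in> adm_dual fV. (\<forall>\<mu> \<in> cmeas. T' (conv_op fV \<mu>) = cint \<mu> lam) \<longrightarrow>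
         (\<forall>f \<in> admissible fV. T' f = T f)) \<and>
     (\<forall>X :: 's \<Rightarrow> real^'n. X \<in> borel_measurable M \<and> prob_space.indep_var M borel X borel V \<longrightarrow>
        (let fY = conv_op fV (distr M borel X, \<lambda>_. 1) in
          (\<forall>y. Im (fY y) = 0) \<and>
          distributed M lborel (\<lambda>s. X s + V s) (\<lambda>y. ennreal (Re (fY y))) \<and>
          T fY = (\<integral>x. lam x \<partial>(distr M borel X))))"
proof
  fix lam :: "real^'n \<Rightarrow> complex"
  assume lam: "lam \<in> C0"
  note P = assms(1) and fm = assms(2) and fnn = assms(3) and dV = assms(4)
  have nn: "(\<integral>\<^sup>+x. ennreal (fV x) \<partial>lborel) = 1" using assm_facts[OF P fm fnn dV] by simp
  have ae: "AE w in lborel. phiV fV w \<noteq> 0" using assms(5) assm_facts(2)[OF P fm fnn dV] by simp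
  have lc: "continuous_on UNIV lam" using C0_bounded(1)[OF lam] .
  obtain B where B: "B > 0" "\<And>x. norm (lam x) \<le> B" using C0_bounded(2)[OF lam] by blast
  have bml: "bm lam" by (rule bm_cont[OF lc B(2)])
  define T where "T F = cint (SOME \<mu>. \<mu> \<in> cmeas \<and> (AE y in lborel. conv_op fV \<mu> y = F y)) lam" for F
  have rep: "T F = cint \<mu> lam" if mu: "\<mu> \<in> cmeas" and e: "AE y in lborel. conv_op fV \<mu> y = F y" for \<mu> F
  proof -
    let ?P = "\<lambda>\<mu>. \<mu> \<in> cmeas \<and> (AE y in lborel. conv_op fV \<mu> y = F y)"
    have "?P (SOME \<mu>. ?P \<mu>)" using mu e by (intro someI[of ?P \<mu>]) auto
    then have m0: "(SOME \<mu>. ?P \<mu>) \<in> cmeas" and e0: "AE y in lborel. conv_op fV (SOME \<mu>. ?P \<mu>) y = F y" by auto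
    have "AE y in lborel. conv_op fV (SOME \<mu>. ?P \<mu>) y = conv_op fV \<mu> y" using e0 e by eventually_elim simp
    then have "cint (SOME \<mu>. ?P \<mu>) lam = cint \<mu> lam"
      by (rule conv_unique[OF m0 mu fm fnn nn ae _ lc B(2)])
    then show ?thesis by (simp add: T_def)
  qed
  have rep1: "T (conv_op fV \<mu>) = cint \<mu> lam" if "\<mu> \<in> cmeas" for \<mu> using rep[OF that] by simp
  have Tdual: "T \<in> adm_dual fV"
    unfolding adm_dual_def
  proof (intro CollectI conjI ballI allI)
    fix f g assume "f \<in> admissible fV" "g \<in> admissible fV"
    then obtain \<mu>1 \<mu>2 where mu1: "\<mu>1 \<in> cmeas" "f = conv_op fV \<mu>1" and mu2: "\<mu>2 \<in> cmeas" "g = conv_op fV \<mu>2"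
      by (auto simp: admissible_def)
    obtain \<mu>3 where mu3: "\<mu>3 \<in> cmeas" and add: "\<forall>h. h \<in> borel_measurable borel \<longrightarrow> integrable (fst \<mu>1) (\<lambda>x. h x * snd \<mu>1 x)
     \<longrightarrow> integrable (fst \<mu>2) (\<lambda>x. h x * snd \<mu>2 x) \<longrightarrow> cint \<mu>3 h = cint \<mu>1 h + cint \<mu>2 h"
      using cmeas_add[OF mu1(1) mu2(1)] by blast
    have "T (\<lambda>x. f x + g x) = cint \<mu>3 lam"
      using conv_add_ae[OF mu1(1) mu2(1) mu3 add fm fnn nn] mu1(2) mu2(2) by (intro rep[OF mu3]) auto
    also have "\<dots> = cint \<mu>1 lam + cint \<mu>2 lam"
      using add cint_integrable[OF mu1(1) bml] cint_integrable[OF mu2(1) bml] bml by (auto simp: bm_def)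
    also have "\<dots> = T f + T g" using rep1[OF mu1(1)] rep1[OF mu2(1)] mu1(2) mu2(2) by simp
    finally show "T (\<lambda>x. f x + g x) = T f + T g" .
  next
    fix c f assume "f \<in> admissible fV"
    then obtain \<mu> where mu: "\<mu> \<in> cmeas" "f = conv_op fV \<mu>" by (auto simp: admissible_def)
    obtain \<nu> g where m: "\<mu> = (\<nu>, g)" "finite_measure \<nu>" "sets \<nu> = sets borel" "g \<in> borel_measurable borel" "integrable \<nu> g"
      using mu(1) by (elim cmeasE) blast
    have muc: "(\<nu>, \<lambda>x. c * g x) \<in> cmeas" using m by (auto simp: cmeas_def)
    have ck: "cint (\<nu>, \<lambda>x. c * g x) k = c * cint \<mu> k" for k
      unfolding cint_def m(1) by (simp add: mult.left_commute)
    have "conv_op fV (\<nu>, \<lambda>x. c * g x) = (\<lambda>y. c * f y)"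
      using ck by (simp add: conv_op_def mu(2))
    then have "T (\<lambda>x. c * f x) = cint (\<nu>, \<lambda>x. c * g x) lam" using rep1[OF muc] by simp
    also have "\<dots> = c * T f" using ck rep1[OF mu(1)] mu(2) by simp
    finally show "T (\<lambda>x. c * f x) = c * T f" .
  next
    show "\<exists>C. \<forall>f\<in>admissible fV. norm (T f) \<le> C * adm_norm fV f"
    proof (intro exI ballI)
      fix f assume "f \<in> admissible fV"
      then obtain \<mu> where mu: "\<mu> \<in> cmeas" "f = conv_op fV \<mu>" by (auto simp: admissible_def)
      let ?Q = "\<lambda>\<mu>. \<mu> \<in> cmeas \<and> conv_op fV \<mu> = f"
      have "?Q (SOME \<mu>. ?Q \<mu>)" using mu by (intro someI[of ?Q \<mu>]) auto
      then have mA: "(SOME \<mu>. ?Q \<mu>) \<in> cmeas" "conv_op fV (SOME \<mu>. ?Q \<mu>) = f" by auto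
      have "T f = cint (SOME \<mu>. ?Q \<mu>) lam" using rep1[OF mA(1)] mA(2) by simp
      also have "norm \<dots> \<le> B * tv_norm (SOME \<mu>. ?Q \<mu>)" by (rule cint_tv_bound[OF mA(1) lam B])
      also have "\<dots> = B * adm_norm fV f" by (simp add: adm_norm_def)
      finally show "norm (T f) \<le> B * adm_norm fV f" .
    qed
  qed
  show "\<exists>T \<in> adm_dual fV.
     (\<forall>\<mu> \<in> cmeas. T (conv_op fV \<mu>) = cint \<mu> lam) \<and>
     (\<forall>T' \<in> adm_dual fV. (\<forall>\<mu> \<in> cmeas. T' (conv_op fV \<mu>) = cint \<mu> lam) \<longrightarrow>
         (\<forall>f \<in> admissible fV. T' f = T f)) \<and>
     (\<forall>X :: 's \<Rightarrow> real^'n. X \<in> borel_measurable M \<and> prob_space.indep_var M borel X borel V \<longrightarrow>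
        (let fY = conv_op fV (distr M borel X, \<lambda>_. 1) in
          (\<forall>y. Im (fY y) = 0) \<and>
          distributed M lborel (\<lambda>s. X s + V s) (\<lambda>y. ennreal (Re (fY y))) \<and>
          T fY = (\<integral>x. lam x \<partial>(distr M borel X))))"
  proof (intro bexI[OF _ Tdual] conjI ballI impI allI)
    show "T (conv_op fV \<mu>) = cint \<mu> lam" if "\<mu> \<in> cmeas" for \<mu> using rep1[OF that] .
  next
    fix T' f assume "\<forall>\<mu>\<in>cmeas. T' (conv_op fV \<mu>) = cint \<mu> lam" "f \<in> admissible fV"
    then show "T' f = T f" using rep1 by (auto simp: admissible_def)
  next
    fix X :: "'s \<Rightarrow> real^'n"
    assume XX: "X \<in> borel_measurable M \<and> prob_space.indep_var M borel X borel V"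
    interpret prob_space M by (rule P)
    have fin: "finite_measure (distr M borel X)"
      using XX prob_space.finite_measure[OF prob_space_distr[of X borel]] by auto
    have cm: "(distr M borel X, \<lambda>_. 1) \<in> cmeas"
      using fin finite_measure.integrable_const[OF fin, of "1::complex"] by (auto simp: cmeas_def)
    have "T (conv_op fV (distr M borel X, \<lambda>_. 1)) = (\<integral>x. lam x \<partial>(distr M borel X))"
      using rep1[OF cm] by (simp add: cint_def)
    then show "let fY = conv_op fV (distr M borel X, \<lambda>_. 1) in
          (\<forall>y. Im (fY y) = 0) \<and>
          distributed M lborel (\<lambda>s. X s + V s) (\<lambda>y. ennreal (Re (fY y))) \<and>
          T fY = (\<integral>x. lam x \<partial>(distr M borel X))"
      using sum_distributed[OF P fm fnn dV] XX by (simp add: Let_def)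
  qed
qed

end
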